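(* Let $(\|\cdot\|,\mathcal{P})$ be a sparsity structure on $\mathcal{E}$, let $B:\mathcal{X}\to\mathcal{E}$ be linear, and let $A:\mathcal{X}\to\mathbb{R}^n$ be linear. For $P\in\mathcal{P}$ define $$\mathcal{C}_P=\bigcup_{x\in\mathcal{X}:\ PBx=Bx}\mathcal{T}(x),\qquad \mathcal{D}_P=\{z\in\mathcal{X}:\ \|\bar P Bz\|\le\|PBz\|\}.$$ Then $\mathcal{C}_P\subseteq\mathcal{D}_P$ for every $P\in\mathcal{P}$. Consequently, for every $k\ge 0$, $\mu_k(A)\ge\sigma_k(A)$, where $$\mu_k(A)=\inf_{\substack{P\in\mathcal{P}_k,\ x\in\mathcal{X}\\ PBx=Bx}}\ \inf_{z\in\mathcal{T}(x),\,z\ne 0}\frac{\|Az\|_2}{\|z\|_2},\qquad \sigma_k(A)=\inf_{\substack{P\in\mathcal{P}_k,\ z\in\mathcal{X},\ z\neq 0\\ \|\bar PBz\|\le\|PBz\|}}\frac{\|Az\|_2}{\|z\|_2}.$$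
   Context: Sparsity structure: let $\mathcal{X},\mathcal{E}$ be finite-dimensional Euclidean spaces and $B:\mathcal{X}\to\mathcal{E}$ a linear map. A sparsity structure on $\mathcal{E}$ is a norm $\|\cdot\|$ on $\mathcal{E}$, with dual norm $\|\cdot\|_*$, together with a family $\mathcal{P}$ of linear maps $\mathcal{E}\to\mathcal{E}$ such that: (i) every $P\in\mathcal{P}$ is a projector, $P^2=P$; (ii) every $P\in\mathcal{P}$ is assigned a weight $\nu(P)\ge 0$ and a linear map $\bar P:\mathcal{E}\to\mathcal{E}$ with $P\bar P=0$; (iii) for every $P\in\mathcal{P}$ and all $f,g\in\mathcal{E}$, $\|P^*f+\bar P^*g\|_*\le\max(\|f\|_*,\|g\|_* )$, where $P^*$ and $\bar P^*$ denote adjoints. For $k\ge 0$, $\mathcal{P}_k=\{P\in\mathcal{P}:\nu(P)\le k\}$. Tangent cone: for $x\in\mathcal{X}$, $\mathcal{T}(x)=\{\lambda z:\ \lambda\ge 0,\ z\in\mathcal{X},\ \|Bx+Bz\|\le\|Bx\|\}$. $\|\cdot\|_2$ is the Euclidean norm. *)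

theory Defs
  imports "HOL-Analysis.Analysis"
begin

definition is_norm :: "('e::real_vector \<Rightarrow> real) \<Rightarrow> bool" where
  "is_norm N \<longleftrightarrow> (\<forall>x y. N (x + y) \<le> N x + N y) \<and> (\<forall>c x. N (c *\<^sub>R x) = \<bar>c\<bar> * N x)
     \<and> (\<forall>x. N x = 0 \<longleftrightarrow> x = 0)"

definition dual_norm :: "('e::real_inner \<Rightarrow> real) \<Rightarrow> 'e \<Rightarrow> real" where
  "dual_norm N f = Sup {f \<bullet> e | e. N e \<le> 1}"

definition sparsity_structure ::
  "('e::euclidean_space \<Rightarrow> real) \<Rightarrow> ('e \<Rightarrow> 'e) set \<Rightarrow> (('e \<Rightarrow> 'e) \<Rightarrow> real)
     \<Rightarrow> (('e \<Rightarrow> 'e) \<Rightarrow> ('e \<Rightarrow> 'e)) \<Rightarrow> bool" where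
  "sparsity_structure N PP nu Pbar \<longleftrightarrow> is_norm N \<and>
     (\<forall>P\<in>PP. linear P \<and> P \<circ> P = P \<and> nu P \<ge> 0 \<and> linear (Pbar P) \<and> P \<circ> Pbar P = (\<lambda>_. 0) \<and>
        (\<forall>f g. dual_norm N (adjoint P f + adjoint (Pbar P) g) \<le> max (dual_norm N f) (dual_norm N g)))"

definition PP_k :: "('e \<Rightarrow> 'e) set \<Rightarrow> (('e \<Rightarrow> 'e) \<Rightarrow> real) \<Rightarrow> real \<Rightarrow> ('e \<Rightarrow> 'e) set" where
  "PP_k PP nu k = {P \<in> PP. nu P \<le> k}"

definition tangent_cone ::
  "('e::real_vector \<Rightarrow> real) \<Rightarrow> ('x::real_vector \<Rightarrow> 'e) \<Rightarrow> 'x \<Rightarrow> 'x set" where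
  "tangent_cone N B x = {l *\<^sub>R z | l z. l \<ge> 0 \<and> N (B x + B z) \<le> N (B x)}"

definition C_set ::
  "('e::real_vector \<Rightarrow> real) \<Rightarrow> ('x::real_vector \<Rightarrow> 'e) \<Rightarrow> ('e \<Rightarrow> 'e) \<Rightarrow> 'x set" where
  "C_set N B P = (\<Union>x\<in>{x. P (B x) = B x}. tangent_cone N B x)"

definition D_set ::
  "('e::real_vector \<Rightarrow> real) \<Rightarrow> ('x::real_vector \<Rightarrow> 'e) \<Rightarrow> ('e \<Rightarrow> 'e) \<Rightarrow> ('e \<Rightarrow> 'e) \<Rightarrow> 'x set" where
  "D_set N B P Pb = {z. N (Pb (B z)) \<le> N (P (B z))}"

text \<open>Infima taken in the extended reals (infimum of the empty set is \<open>\<infinity>\<close>).\<close>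
definition mu_k ::
  "('e::real_vector \<Rightarrow> real) \<Rightarrow> ('e \<Rightarrow> 'e) set \<Rightarrow> (('e \<Rightarrow> 'e) \<Rightarrow> real)
   \<Rightarrow> ('x::real_normed_vector \<Rightarrow> 'e) \<Rightarrow> ('x \<Rightarrow> 'm::real_normed_vector) \<Rightarrow> real \<Rightarrow> ereal" where
  "mu_k N PP nu B A k = (INF (P, x) \<in> {(P, x). P \<in> PP_k PP nu k \<and> P (B x) = B x}.
      INF z \<in> tangent_cone N B x - {0}. ereal (norm (A z) / norm z))"

definition sigma_k ::
  "('e::real_vector \<Rightarrow> real) \<Rightarrow> ('e \<Rightarrow> 'e) set \<Rightarrow> (('e \<Rightarrow> 'e) \<Rightarrow> real) \<Rightarrow> (('e \<Rightarrow> 'e) \<Rightarrow> ('e \<Rightarrow> 'e))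
   \<Rightarrow> ('x::real_normed_vector \<Rightarrow> 'e) \<Rightarrow> ('x \<Rightarrow> 'm::real_normed_vector) \<Rightarrow> real \<Rightarrow> ereal" where
  "sigma_k N PP nu Pbar B A k = (INF (P, z) \<in> {(P, z). P \<in> PP_k PP nu k \<and> z \<noteq> 0 \<and>
      N (Pbar P (B z)) \<le> N (P (B z))}. ereal (norm (A z) / norm z))"

end

theory Submission
  imports Defs
begin

lemma nrm_0: "is_norm N \<Longrightarrow> N 0 = 0"
  unfolding is_norm_def by auto

lemma nrm_neg: "is_norm N \<Longrightarrow> N (- x) = N x"
  unfolding is_norm_def by (metis abs_minus_cancel abs_one mult_1 scaleR_minus1_left)

lemma nrm_nonneg: "is_norm N \<Longrightarrow> N x \<ge> 0"
proof -
  assume n: "is_norm N"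
  have "N (x + - x) \<le> N x + N (- x)" using n unfolding is_norm_def by blast
  then show ?thesis using nrm_0[OF n] nrm_neg[OF n, of x] by simp
qed

lemma nrm_tri: "is_norm N \<Longrightarrow> N (x + y) \<le> N x + N y"
  unfolding is_norm_def by blast

lemma nrm_scale: "is_norm N \<Longrightarrow> N (c *\<^sub>R x) = \<bar>c\<bar> * N x"
  unfolding is_norm_def by blast

lemma nrm_sum: assumes n: "is_norm N" and "finite S" shows "N (sum f S) \<le> (\<Sum>i\<in>S. N (f i))"
  using assms(2)
proof (induction S rule: finite_induct)
  case empty then show ?case using nrm_0[OF n] by simp
next
  case (insert a S)
  then show ?case using nrm_tri[OF n, of "f a" "sum f S"] by simp
qed

lemma nrm_upper:
  fixes N :: "'e::euclidean_space \<Rightarrow> real"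
  assumes n: "is_norm N"
  shows "N x \<le> (\<Sum>b\<in>Basis. N b) * norm x"
proof -
  have "N x = N (\<Sum>b\<in>Basis. (x \<bullet> b) *\<^sub>R b)" by (simp add: euclidean_representation)
  also have "\<dots> \<le> (\<Sum>b\<in>Basis. N ((x \<bullet> b) *\<^sub>R b))" by (rule nrm_sum[OF n]) simp
  also have "\<dots> = (\<Sum>b\<in>Basis. \<bar>x \<bullet> b\<bar> * N b)" using nrm_scale[OF n] by simp
  also have "\<dots> \<le> (\<Sum>b\<in>Basis. norm x * N b)"
    by (rule sum_mono) (simp add: Basis_le_norm mult_right_mono nrm_nonneg[OF n])
  also have "\<dots> = (\<Sum>b\<in>Basis. N b) * norm x" by (simp add: sum_distrib_left mult.commute)
  finally show ?thesis .
qed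

lemma nrm_cont:
  fixes N :: "'e::euclidean_space \<Rightarrow> real"
  assumes n: "is_norm N"
  shows "continuous_on S N"
proof -
  define M where "M = (\<Sum>b\<in>Basis. N b)"
  have M0: "M \<ge> 0" unfolding M_def by (simp add: sum_nonneg nrm_nonneg[OF n])
  have L: "\<bar>N x - N y\<bar> \<le> M * norm (x - y)" for x y
  proof -
    have "N x \<le> N (x - y) + N y" using nrm_tri[OF n, of "x - y" y] by simp
    moreover have "N y \<le> N (y - x) + N x" using nrm_tri[OF n, of "y - x" x] by simp
    moreover have "N (y - x) = N (x - y)" using nrm_neg[OF n, of "x - y"] by simp
    moreover have "N (x - y) \<le> M * norm (x - y)" using nrm_upper[OF n] M_def by simp
    ultimately show ?thesis by linarith
  qed
  show ?thesis unfolding continuous_on_iff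
  proof (intro ballI allI impI)
    fix x e assume "x \<in> S" "(e::real) > 0"
    show "\<exists>d>0. \<forall>x'\<in>S. dist x' x < d \<longrightarrow> dist (N x') (N x) < e"
    proof (intro exI[of _ "e / (M + 1)"] conjI ballI impI)
      show "e / (M + 1) > 0" using \<open>e > 0\<close> M0 by simp
      fix x' assume "x' \<in> S" "dist x' x < e / (M + 1)"
      then have "norm (x' - x) * (M + 1) < e" using M0 by (simp add: dist_norm pos_less_divide_eq)
      moreover have "M * norm (x' - x) \<le> norm (x' - x) * (M + 1)" using M0
        by (simp add: algebra_simps)
      ultimately show "dist (N x') (N x) < e" using L[of x' x] by (simp add: dist_real_def)
    qed
  qed
qed

lemma nrm_lower:
  fixes N :: "'e::euclidean_space \<Rightarrow> real"
  assumes n: "is_norm N"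
  shows "\<exists>c>0. \<forall>x. c * norm x \<le> N x"
proof -
  have "sphere (0::'e) 1 \<noteq> {}" by simp
  then obtain y where y: "y \<in> sphere 0 1" and ym: "\<forall>z\<in>sphere 0 1. N y \<le> N z"
    using continuous_attains_inf[OF compact_sphere _ nrm_cont[OF n]] by blast
  have "y \<noteq> 0" using y by auto
  then have c: "N y > 0" using nrm_nonneg[OF n, of y] n unfolding is_norm_def by force
  show ?thesis
  proof (intro exI[of _ "N y"] conjI allI c)
    fix x :: 'e
    show "N y * norm x \<le> N x"
    proof (cases "x = 0")
      case True then show ?thesis by (simp add: nrm_0[OF n])
    next
      case False
      then have "N y \<le> N ((1 / norm x) *\<^sub>R x)" using ym by simp
      also have "\<dots> = N x / norm x" using nrm_scale[OF n] by simp
      finally show ?thesis using False by (simp add: pos_le_divide_eq)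
    qed
  qed
qed

lemma dual_bdd:
  fixes N :: "'e::euclidean_space \<Rightarrow> real"
  assumes n: "is_norm N"
  shows "bdd_above {f \<bullet> e | e. N e \<le> 1}"
proof -
  obtain c where c: "c > 0" "\<forall>x. c * norm x \<le> N x" using nrm_lower[OF n] by blast
  show ?thesis
  proof (rule bdd_aboveI[of _ "norm f / c"])
    fix t assume "t \<in> {f \<bullet> e | e. N e \<le> 1}"
    then obtain e where t: "t = f \<bullet> e" and e: "N e \<le> 1" by blast
    have "norm e * c \<le> 1" using c(2)[rule_format, of e] e by (simp add: mult.commute)
    then have "norm e \<le> 1 / c" using c(1) by (simp add: pos_le_divide_eq)
    have "t \<le> norm f * norm e" using t Cauchy_Schwarz_ineq2[of f e] by simp
    also have "\<dots> \<le> norm f * (1 / c)" using mult_left_mono[OF \<open>norm e \<le> 1 / c\<close> norm_ge_zero[of f]] by simp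
    finally show "t \<le> norm f / c" by simp
  qed
qed

lemma dual_apply:
  fixes N :: "'e::euclidean_space \<Rightarrow> real"
  assumes n: "is_norm N" and w: "dual_norm N w \<le> 1"
  shows "w \<bullet> u \<le> N u"
proof (cases "u = 0")
  case True then show ?thesis by (simp add: nrm_0[OF n])
next
  case False
  then have pos: "N u > 0" using nrm_nonneg[OF n, of u] n unfolding is_norm_def by force
  let ?v = "(1 / N u) *\<^sub>R u"
  have v1: "N ?v = 1" using nrm_scale[OF n] pos by simp
  have "w \<bullet> ?v \<le> dual_norm N w" unfolding dual_norm_def
    by (rule cSup_upper[OF _ dual_bdd[OF n]]) (rule CollectI, rule exI[of _ ?v], simp add: v1)
  then have "w \<bullet> u / N u \<le> 1" using w by simp
  then show ?thesis using pos by (simp add: divide_le_eq)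
qed

lemma dual_support:
  fixes N :: "'e::euclidean_space \<Rightarrow> real"
  assumes n: "is_norm N"
  shows "\<exists>f. dual_norm N f \<le> 1 \<and> f \<bullet> v = N v"
proof (cases "v = 0")
  case True
  have "{(0::'e) \<bullet> e | e. N e \<le> 1} = {0}" using nrm_0[OF n] by (auto intro!: exI[of _ 0])
  then show ?thesis using True nrm_0[OF n] by (intro exI[of _ 0]) (simp add: dual_norm_def)
next
  case False
  then have pos: "N v > 0" using nrm_nonneg[OF n, of v] n unfolding is_norm_def by force
  define p where "p = (1 / N v) *\<^sub>R v"
  have Np: "N p = 1" using nrm_scale[OF n] pos by (simp add: p_def)
  define S where "S = (\<lambda>e. p - e) ` {e. N e < 1}"
  have cS: "convex S" unfolding S_def convex_def
  proof (intro ballI allI impI)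
    fix x y and u w :: real
    assume x: "x \<in> (\<lambda>e. p - e) ` {e. N e < 1}" and y: "y \<in> (\<lambda>e. p - e) ` {e. N e < 1}"
      and uw: "0 \<le> u" "0 \<le> w" "u + w = 1"
    obtain a where a: "x = p - a" "N a < 1" using x by blast
    obtain b where b: "y = p - b" "N b < 1" using y by blast
    have eq: "u *\<^sub>R x + w *\<^sub>R y = p - (u *\<^sub>R a + w *\<^sub>R b)"
    proof -
      have "u *\<^sub>R x + w *\<^sub>R y = (u + w) *\<^sub>R p - (u *\<^sub>R a + w *\<^sub>R b)"
        unfolding a(1) b(1) by (simp add: algebra_simps)
      then show ?thesis using uw(3) by simp
    qed
    have "N (u *\<^sub>R a + w *\<^sub>R b) \<le> u * N a + w * N b"
      using nrm_tri[OF n, of "u *\<^sub>R a" "w *\<^sub>R b"] nrm_scale[OF n] uw by simp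
    also have "\<dots> < 1"
    proof -
      have "u * N a \<le> u" "w * N b \<le> w" using a b uw by (simp_all add: mult_left_le)
      moreover have "u * N a < u \<or> w * N b < w"
      proof (cases "u > 0")
        case True then show ?thesis using mult_strict_left_mono[OF a(2) True] by simp
      next
        case False then have "w > 0" using uw by linarith
        then show ?thesis using mult_strict_left_mono[OF b(2)] by simp
      qed
      ultimately show ?thesis using uw by linarith
    qed
    finally show "u *\<^sub>R x + w *\<^sub>R y \<in> (\<lambda>e. p - e) ` {e. N e < 1}" using eq by blast
  qed
  have "0 \<notin> S" unfolding S_def using Np by auto
  then obtain a where a0: "a \<noteq> 0" and aS: "\<forall>x\<in>S. 0 \<le> inner a x"
    using separating_hyperplane_set_0[OF cS] by blast
  have lt: "a \<bullet> e \<le> a \<bullet> p" if "N e < 1" for e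
    using aS that unfolding S_def by (auto simp: inner_diff_right)
  have le: "a \<bullet> e \<le> a \<bullet> p" if e: "N e \<le> 1" for e
  proof (rule ccontr)
    assume "\<not> ?thesis"
    then have g: "a \<bullet> e > a \<bullet> p" by simp
    have ae: "a \<bullet> e > 0"
    proof -
      have "a \<bullet> 0 \<le> a \<bullet> p" using lt[of 0] nrm_0[OF n] by simp
      then show ?thesis using g by simp
    qed
    define t where "t = (a \<bullet> p + a \<bullet> e) / (2 * (a \<bullet> e))"
    have t1: "t < 1" using g ae by (simp add: t_def)
    have ap0: "a \<bullet> p \<ge> 0" using lt[of 0] nrm_0[OF n] by simp
    have t0: "t \<ge> 0" using ae ap0 unfolding t_def by simp
    have "t * N e \<le> t * 1" by (rule mult_left_mono[OF e t0])
    then have "N (t *\<^sub>R e) < 1" using nrm_scale[OF n, of t e] t0 t1 by simp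
    then have "t * (a \<bullet> e) \<le> a \<bullet> p" using lt by force
    moreover have "t * (a \<bullet> e) = (a \<bullet> p + a \<bullet> e) / 2" using ae by (simp add: t_def)
    ultimately show False using g by simp
  qed
  obtain c where c: "c > 0" "\<forall>x. c * norm x \<le> N x" using nrm_lower[OF n] by blast
  have ap: "a \<bullet> p > 0"
  proof -
    define d where "d = 1 / (2 * (\<Sum>b\<in>Basis. N b) * norm a + 1)"
    have Mn: "(\<Sum>b\<in>Basis. N b) * norm a \<ge> 0" by (simp add: sum_nonneg nrm_nonneg[OF n])
    have d0: "d > 0" using Mn by (simp add: d_def)
    have "N (d *\<^sub>R a) \<le> (\<Sum>b\<in>Basis. N b) * norm (d *\<^sub>R a)" by (rule nrm_upper[OF n])
    also have "\<dots> = d * ((\<Sum>b\<in>Basis. N b) * norm a)" using d0 by simp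
    also have "\<dots> < 1" using Mn d0 unfolding d_def by (simp add: field_simps)
    finally have "a \<bullet> (d *\<^sub>R a) \<le> a \<bullet> p" using lt by blast
    moreover have "a \<bullet> (d *\<^sub>R a) > 0" using d0 a0 by simp
    ultimately show ?thesis by simp
  qed
  define f where "f = (1 / (a \<bullet> p)) *\<^sub>R a"
  have "dual_norm N f \<le> 1" unfolding dual_norm_def
  proof (rule cSup_least)
    show "{f \<bullet> e |e. N e \<le> 1} \<noteq> {}" using nrm_0[OF n] by (auto intro!: exI[of _ 0])
    fix t assume "t \<in> {f \<bullet> e |e. N e \<le> 1}"
    then obtain e where "t = f \<bullet> e" "N e \<le> 1" by blast
    then show "t \<le> 1" using le[of e] ap by (simp add: f_def divide_le_eq)
  qed
  moreover have "f \<bullet> v = N v"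
  proof -
    have "v = N v *\<^sub>R p" using pos by (simp add: p_def)
    then have "f \<bullet> v = N v * (f \<bullet> p)" by (metis inner_scaleR_right)
    then show ?thesis using ap by (simp add: f_def)
  qed
  ultimately show ?thesis by blast
qed

lemma key_ineq:
  fixes N :: "'e::euclidean_space \<Rightarrow> real"
  assumes ss: "sparsity_structure N PP nu Pbar" and P: "P \<in> PP"
  shows "N (P u) + N (Pbar P u) \<le> N u"
proof -
  have n: "is_norm N" using ss unfolding sparsity_structure_def by blast
  have lP: "linear P" and lQ: "linear (Pbar P)"
    and D: "\<And>f g. dual_norm N (adjoint P f + adjoint (Pbar P) g) \<le> max (dual_norm N f) (dual_norm N g)"
    using ss P unfolding sparsity_structure_def by blast+
  obtain f where f: "dual_norm N f \<le> 1" "f \<bullet> P u = N (P u)" using dual_support[OF n] by blast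
  obtain g where g: "dual_norm N g \<le> 1" "g \<bullet> Pbar P u = N (Pbar P u)" using dual_support[OF n] by blast
  let ?w = "adjoint P f + adjoint (Pbar P) g"
  have "dual_norm N ?w \<le> 1" using D[of f g] f g by simp
  then have "?w \<bullet> u \<le> N u" by (rule dual_apply[OF n])
  moreover have "?w \<bullet> u = f \<bullet> P u + g \<bullet> Pbar P u"
    using adjoint_clauses(2)[OF lP] adjoint_clauses(2)[OF lQ] by (simp add: inner_add_left)
  ultimately show ?thesis using f g by simp
qed

theorem lemma6:
  fixes N :: "'e::euclidean_space \<Rightarrow> real"
    and PP :: "('e \<Rightarrow> 'e) set"
    and nu :: "('e \<Rightarrow> 'e) \<Rightarrow> real"
    and Pbar :: "('e \<Rightarrow> 'e) \<Rightarrow> ('e \<Rightarrow> 'e)"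
    and B :: "'x::euclidean_space \<Rightarrow> 'e"
    and A :: "'x \<Rightarrow> real ^ 'n"
  assumes "sparsity_structure N PP nu Pbar"
    and "linear B"
    and "linear A"
  shows "(\<forall>P\<in>PP. C_set N B P \<subseteq> D_set N B P (Pbar P))
       \<and> (\<forall>k::real. k \<ge> 0 \<longrightarrow> mu_k N PP nu B A k \<ge> sigma_k N PP nu Pbar B A k)"
proof -
  have n: "is_norm N" using assms(1) unfolding sparsity_structure_def by blast
  have CD: "C_set N B P \<subseteq> D_set N B P (Pbar P)" if P: "P \<in> PP" for P
  proof
    fix y assume "y \<in> C_set N B P"
    then obtain x l z where x: "P (B x) = B x" and y: "y = l *\<^sub>R z" and l: "l \<ge> 0"
      and t: "N (B x + B z) \<le> N (B x)"
      unfolding C_set_def tangent_cone_def by blast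
    have lP: "linear P" and lQ: "linear (Pbar P)" using assms(1) P unfolding sparsity_structure_def by blast+
    let ?e = "B x" and ?h = "B z"
    have "N (P ?e) + N (Pbar P ?e) \<le> N ?e" using key_ineq[OF assms(1) P] .
    then have "N (Pbar P ?e) \<le> 0" using x by simp
    then have Qe: "Pbar P ?e = 0" using nrm_nonneg[OF n, of "Pbar P ?e"] n unfolding is_norm_def by force
    have "N (P (?e + ?h)) + N (Pbar P (?e + ?h)) \<le> N (?e + ?h)" using key_ineq[OF assms(1) P] .
    moreover have "P (?e + ?h) = ?e + P ?h" using x linear_add[OF lP] by simp
    moreover have "Pbar P (?e + ?h) = Pbar P ?h" using Qe linear_add[OF lQ] by simp
    moreover have "N ?e \<le> N (?e + P ?h) + N (P ?h)"
      using nrm_tri[OF n, of "?e + P ?h" "- P ?h"] nrm_neg[OF n, of "P ?h"] by simp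
    ultimately have le: "N (Pbar P ?h) \<le> N (P ?h)" using t by simp
    have "B y = l *\<^sub>R ?h" using y linear_scale[OF assms(2)] by simp
    then have "N (Pbar P (B y)) = l * N (Pbar P ?h)" "N (P (B y)) = l * N (P ?h)"
      using linear_scale[OF lP] linear_scale[OF lQ] nrm_scale[OF n] l by simp_all
    then show "y \<in> D_set N B P (Pbar P)" unfolding D_set_def using le l
      by (simp add: mult_left_mono)
  qed
  have MS: "mu_k N PP nu B A k \<ge> sigma_k N PP nu Pbar B A k" for k
    unfolding mu_k_def
  proof (rule INF_greatest, clarify, rule INF_greatest)
    fix P x z assume P: "P \<in> PP_k PP nu k" and x: "P (B x) = B x"
      and z: "z \<in> tangent_cone N B x - {0}"
    have "P \<in> PP" using P unfolding PP_k_def by blast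
    have "z \<in> C_set N B P" using x z unfolding C_set_def by blast
    then have "z \<in> D_set N B P (Pbar P)" using CD[OF \<open>P \<in> PP\<close>] by blast
    then have "(P, z) \<in> {(P, z). P \<in> PP_k PP nu k \<and> z \<noteq> 0 \<and> N (Pbar P (B z)) \<le> N (P (B z))}"
      using P z unfolding D_set_def by simp
    then show "sigma_k N PP nu Pbar B A k \<le> ereal (norm (A z) / norm z)"
      unfolding sigma_k_def by (rule INF_lower2) simp
  qed
  show ?thesis using CD MS by blast
qed

end
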